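(* Let $k\ge2$ and $\beta\in\mathbb R$, and let $P(z_1,\dots,z_k)=\beta\prod_{i=1}^k(1+z_i)+(1-\beta)\big(1+\prod_{i=1}^kz_i\big)$ be the multivariate Ising partition function of the hypergraph consisting of a single hyperedge $\{1,\dots,k\}$ with activity $\beta$. If either $k=2$ and $-1<\beta<1$, or $k\ge3$ and $-\frac{1}{2^{k-1}-1}<\beta<\frac{1}{2^{k-1}\cos^{k-1}(\frac{\pi}{k-1})+1}$, then $P$ has the Lee-Yang property.
   Context: A multilinear polynomial $P(z_1,\dots,z_n)$ has the Lee-Yang property if $P(\lambda_1,\dots,\lambda_n)\neq0$ whenever $|\lambda_i|\ge1$ for all $i$ and $|\lambda_i|>1$ for at least one $i$. *)

theory Defs
  imports "HOL-Analysis.Analysis"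
begin

text \<open>A polynomial in n variables z_1..z_n is represented as a function of
  an assignment z :: nat => complex, using the indices 1..n.\<close>
definition lee_yang :: "nat \<Rightarrow> ((nat \<Rightarrow> complex) \<Rightarrow> complex) \<Rightarrow> bool" where
  "lee_yang n P \<longleftrightarrow>
     (\<forall>w :: nat \<Rightarrow> complex. (\<forall>i\<in>{1..n}. norm (w i) \<ge> 1) \<and> (\<exists>i\<in>{1..n}. norm (w i) > 1)
        \<longrightarrow> P w \<noteq> 0)"

definition ising_edge :: "nat \<Rightarrow> real \<Rightarrow> (nat \<Rightarrow> complex) \<Rightarrow> complex" where
  "ising_edge k \<beta> z =
     complex_of_real \<beta> * (\<Prod>i=1..k. 1 + z i)
     + complex_of_real (1 - \<beta>) * (1 + (\<Prod>i=1..k. z i))"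

end

theory Submission
  imports Defs
begin

lemma h_identity:
  fixes p q r s :: complex and x y :: real
  shows "(cmod (p + q * Complex x y))^2 - (cmod (r + s * Complex x y))^2
       = ((cmod (p + q * Complex 0 y))^2 - (cmod (r + s * Complex 0 y))^2)
         + ((cmod q)^2 - (cmod s)^2) * x^2
         + 2 * (Re (p * cnj q) - Re (r * cnj s)) * x"
  unfolding cmod_power2 by (simp add: algebra_simps power2_eq_square)

lemma OVL:
  fixes p q r s u :: complex
  assumes sq: "cmod s \<le> cmod q"
    and axis: "\<And>y::real. cmod (r + s * Complex 0 y) \<le> cmod (p + q * Complex 0 y)"
    and nz: "\<And>v. 0 \<le> Re v \<Longrightarrow> p + q * v \<noteq> 0"
    and u: "0 \<le> Re u"
  shows "cmod (r + s * u) \<le> cmod (p + q * u)"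
proof (cases "q = 0")
  case True
  then have "s = 0" using sq by simp
  then show ?thesis using axis[of 0] True by simp
next
  case False
  define ust where "ust = - p / q"
  have a0: "p + q * ust = 0" using False by (simp add: ust_def)
  have xneg: "Re ust < 0" using nz[of ust] a0 by force
  define ll where "ll = Re (p * cnj q) - Re (r * cnj s)"
  have "(cmod (p + q * Complex (Re ust) (Im ust)))^2 - (cmod (r + s * Complex (Re ust) (Im ust)))^2
       = ((cmod (p + q * Complex 0 (Im ust)))^2 - (cmod (r + s * Complex 0 (Im ust)))^2)
         + ((cmod q)^2 - (cmod s)^2) * (Re ust)^2 + 2 * ll * Re ust"
    unfolding ll_def by (rule h_identity)
  moreover have "Complex (Re ust) (Im ust) = ust" by simp
  moreover have "(cmod (p + q * Complex 0 (Im ust)))^2 - (cmod (r + s * Complex 0 (Im ust)))^2 \<ge> 0"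
    using axis[of "Im ust"] by (simp add: power_mono)
  moreover have "((cmod q)^2 - (cmod s)^2) * (Re ust)^2 \<ge> 0"
    using sq by (simp add: power_mono)
  ultimately have "2 * ll * Re ust \<le> 0" using a0 by (smt (verit) zero_le_power2 norm_zero power_zero_numeral)
  then have l0: "ll \<ge> 0" using xneg by (metis mult_less_0_iff not_le zero_less_mult_iff zero_less_numeral mult.assoc)
  have e: "(cmod (p + q * u))^2 - (cmod (r + s * u))^2
       = ((cmod (p + q * Complex 0 (Im u)))^2 - (cmod (r + s * Complex 0 (Im u)))^2)
         + ((cmod q)^2 - (cmod s)^2) * (Re u)^2 + 2 * ll * Re u"
    using h_identity[of p q "Re u" "Im u" r s] unfolding ll_def by simp
  have a: "(cmod (p + q * Complex 0 (Im u)))^2 - (cmod (r + s * Complex 0 (Im u)))^2 \<ge> 0"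
    using axis[of "Im u"] by (simp add: power_mono)
  have b: "((cmod q)^2 - (cmod s)^2) * (Re u)^2 \<ge> 0"
    using sq by (simp add: power_mono)
  have c: "2 * ll * Re u \<ge> 0" using l0 u by simp
  from e a b c have "(cmod (r + s * u))^2 \<le> (cmod (p + q * u))^2" by linarith
  then show ?thesis by (rule power2_le_imp_le) simp
qed

lemma cmod_1m_le: "0 \<le> Re u \<Longrightarrow> cmod (1 - u) \<le> cmod (1 + u)"
proof -
  assume "0 \<le> Re u"
  then have "(cmod (1 - u))^2 \<le> (cmod (1 + u))^2"
    unfolding cmod_power2 by (simp add: power2_eq_square algebra_simps)
  then show ?thesis by (rule power2_le_imp_le) simp
qed

lemma KL_gen:
  fixes I :: "nat set" and c :: real
  assumes AL: "\<And>v. (\<forall>i\<in>I. 0 \<le> Re (v i)) \<Longrightarrow> (\<Prod>i\<in>I. 1 + v i) \<noteq> of_real c"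
    and fin: "finite I"
  shows "finite J \<Longrightarrow> \<forall>u. (\<forall>i\<in>I. 0 \<le> Re (u i)) \<and> (\<forall>i\<in>I - J. Re (u i) = 0) \<longrightarrow>
      cmod ((\<Prod>i\<in>I. 1 - u i) - of_real c) \<le> cmod ((\<Prod>i\<in>I. 1 + u i) - of_real c)"
proof (induction J rule: finite_induct)
  case empty
  show ?case
  proof (intro allI impI)
    fix u :: "nat \<Rightarrow> complex"
    assume "(\<forall>i\<in>I. 0 \<le> Re (u i)) \<and> (\<forall>i\<in>I - {}. Re (u i) = 0)"
    then have z: "\<forall>i\<in>I. Re (u i) = 0" by simp
    have "(\<Prod>i\<in>I. 1 - u i) = (\<Prod>i\<in>I. cnj (1 + u i))"
      by (rule prod.cong) (use z in \<open>auto simp: complex_eq_iff\<close>)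
    also have "\<dots> = cnj (\<Prod>i\<in>I. 1 + u i)" by simp
    finally have "(\<Prod>i\<in>I. 1 - u i) - of_real c = cnj ((\<Prod>i\<in>I. 1 + u i) - of_real c)"
      by simp
    then show "cmod ((\<Prod>i\<in>I. 1 - u i) - of_real c) \<le> cmod ((\<Prod>i\<in>I. 1 + u i) - of_real c)"
      by (simp only: complex_mod_cnj)
  qed
next
  case (insert j J)
  show ?case
  proof (intro allI impI)
    fix u :: "nat \<Rightarrow> complex"
    assume hu: "(\<forall>i\<in>I. 0 \<le> Re (u i)) \<and> (\<forall>i\<in>I - insert j J. Re (u i) = 0)"
    show "cmod ((\<Prod>i\<in>I. 1 - u i) - of_real c) \<le> cmod ((\<Prod>i\<in>I. 1 + u i) - of_real c)"
    proof (cases "j \<in> I")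
      case False
      then have "\<forall>i\<in>I - J. Re (u i) = 0" using hu by auto
      then show ?thesis using insert.IH hu by blast
    next
      case True
      define A1 where "A1 = (\<Prod>i\<in>I - {j}. 1 + u i)"
      define B1 where "B1 = (\<Prod>i\<in>I - {j}. 1 - u i)"
      have splitA: "(\<Prod>i\<in>I. 1 + (u(j := v)) i) = (1 + v) * A1" for v
      proof -
        have "(\<Prod>i\<in>I. 1 + (u(j := v)) i) = (1 + v) * (\<Prod>i\<in>I - {j}. 1 + (u(j := v)) i)"
          using prod.remove[OF fin True, of "\<lambda>i. 1 + (u(j := v)) i"] by simp
        also have "(\<Prod>i\<in>I - {j}. 1 + (u(j := v)) i) = A1"
          unfolding A1_def by (rule prod.cong) auto
        finally show ?thesis .
      qed
      have splitB: "(\<Prod>i\<in>I. 1 - (u(j := v)) i) = (1 - v) * B1" for v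
      proof -
        have "(\<Prod>i\<in>I. 1 - (u(j := v)) i) = (1 - v) * (\<Prod>i\<in>I - {j}. 1 - (u(j := v)) i)"
          using prod.remove[OF fin True, of "\<lambda>i. 1 - (u(j := v)) i"] by simp
        also have "(\<Prod>i\<in>I - {j}. 1 - (u(j := v)) i) = B1"
          unfolding B1_def by (rule prod.cong) auto
        finally show ?thesis .
      qed
      have uu: "u(j := u j) = u" by simp
      have "cmod ((B1 - of_real c) + (- B1) * u j) \<le> cmod ((A1 - of_real c) + A1 * u j)"
      proof (rule OVL)
        have "cmod B1 = (\<Prod>i\<in>I - {j}. cmod (1 - u i))" unfolding B1_def by (simp add: prod_norm)
        also have "\<dots> \<le> (\<Prod>i\<in>I - {j}. cmod (1 + u i))"
          by (rule prod_mono) (use hu cmod_1m_le in auto)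
        also have "\<dots> = cmod A1" unfolding A1_def by (simp add: prod_norm)
        finally show "cmod (- B1) \<le> cmod A1" by simp
      next
        fix y :: real
        let ?w = "u(j := Complex 0 y)"
        have "(\<forall>i\<in>I. 0 \<le> Re (?w i)) \<and> (\<forall>i\<in>I - J. Re (?w i) = 0)"
          using hu by auto
        then have "cmod ((\<Prod>i\<in>I. 1 - ?w i) - of_real c) \<le> cmod ((\<Prod>i\<in>I. 1 + ?w i) - of_real c)"
          using insert.IH by blast
        then show "cmod (B1 - of_real c + - B1 * Complex 0 y) \<le> cmod (A1 - of_real c + A1 * Complex 0 y)"
          unfolding splitA splitB by (simp add: algebra_simps)
      next
        fix v :: complex
        assume "0 \<le> Re v"
        then have "(\<Prod>i\<in>I. 1 + (u(j := v)) i) \<noteq> of_real c"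
          using hu by (intro AL) auto
        then show "A1 - of_real c + A1 * v \<noteq> 0"
          unfolding splitA by (simp add: algebra_simps)
      next
        show "0 \<le> Re (u j)" using hu True by auto
      qed
      moreover have "(\<Prod>i\<in>I. 1 - u i) - of_real c = (B1 - of_real c) + (- B1) * u j"
        using splitB[of "u j"] by (simp add: algebra_simps)
      moreover have "(\<Prod>i\<in>I. 1 + u i) - of_real c = (A1 - of_real c) + A1 * u j"
        using splitA[of "u j"] by (simp add: algebra_simps)
      ultimately show ?thesis by (simp only:)
    qed
  qed
qed

lemma KL:
  fixes I :: "nat set" and c :: real
  assumes AL: "\<And>v. (\<forall>i\<in>I. 0 \<le> Re (v i)) \<Longrightarrow> (\<Prod>i\<in>I. 1 + v i) \<noteq> of_real c"
    and fin: "finite I" and hu: "\<forall>i\<in>I. 0 \<le> Re (u i)"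
  shows "cmod ((\<Prod>i\<in>I. 1 - u i) - of_real c) \<le> cmod ((\<Prod>i\<in>I. 1 + u i) - of_real c)"
  using KL_gen[OF AL fin fin] hu by blast

lemma cos_concave: "concave_on {-(pi/2)..pi/2} cos"
proof (rule f''_le0_imp_concave[where f' = "\<lambda>x. - sin x" and f'' = "\<lambda>x. - cos x"])
  show "convex {-(pi/2)..pi/2::real}" by simp
next
  fix x :: real show "DERIV cos x :> - sin x" by (rule DERIV_cos)
next
  fix x :: real show "DERIV (\<lambda>x. - sin x) x :> - cos x" by (auto intro!: derivative_eq_intros)
next
  fix x :: real assume "x \<in> {-(pi/2)..pi/2}"
  then show "- cos x \<le> 0" by (simp add: cos_ge_zero)
qed

lemma cos_prod_bound:
  fixes I :: "nat set" and \<phi> :: "nat \<Rightarrow> real"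
  assumes fin: "finite I" and ne: "I \<noteq> {}" and b: "\<forall>i\<in>I. \<bar>\<phi> i\<bar> < pi/2"
  shows "(\<Prod>i\<in>I. cos (\<phi> i)) \<le> cos ((\<Sum>i\<in>I. \<phi> i) / card I) ^ card I"
proof -
  define n where "n = card I"
  have n0: "n > 0" using fin ne by (simp add: n_def card_gt_0_iff)
  have cpos: "\<forall>i\<in>I. cos (\<phi> i) > 0" using b by (auto intro!: cos_gt_zero_pi)
  have jen: "cos (\<Sum>i\<in>I. (1 / real n) *\<^sub>R \<phi> i) \<ge> (\<Sum>i\<in>I. (1 / real n) * cos (\<phi> i))"
    by (rule concave_on_sum[OF fin ne cos_concave]) (use b n0 in \<open>auto simp: n_def\<close>)
  have e1: "(\<Sum>i\<in>I. (1 / real n) *\<^sub>R \<phi> i) = (\<Sum>i\<in>I. \<phi> i) / n"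
    by (simp add: sum_divide_distrib)
  have e2: "(\<Sum>i\<in>I. (1 / real n) * cos (\<phi> i)) = (\<Sum>i\<in>I. cos (\<phi> i) / card I)"
    by (simp add: n_def)
  have am: "(\<Sum>i\<in>I. cos (\<phi> i) / card I) \<ge> (\<Prod>i\<in>I. cos (\<phi> i)) powr (1 / card I)"
    by (rule arith_geom_mean[OF fin ne]) (use cpos in auto)
  define P where "P = (\<Prod>i\<in>I. cos (\<phi> i))"
  have Ppos: "P > 0" unfolding P_def using cpos by (simp add: prod_pos)
  have "P = (P powr (1 / n)) ^ n"
  proof -
    have "(P powr (1 / n)) ^ n = (P powr (1/n)) powr (real n)"
      using Ppos by (simp add: powr_realpow)
    also have "\<dots> = P" using n0 Ppos by (simp add: powr_powr)
    finally show ?thesis by simp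
  qed
  also have "\<dots> \<le> cos ((\<Sum>i\<in>I. \<phi> i) / n) ^ n"
    by (rule power_mono) (use jen e1 e2 am in \<open>auto simp: P_def n_def\<close>)
  finally show ?thesis by (simp add: P_def n_def)
qed

lemma prod_cis: "finite I \<Longrightarrow> (\<Prod>i\<in>I. cis (f i)) = cis (\<Sum>i\<in>I. f i)"
  by (induction I rule: finite_induct) (auto simp: cis_mult)

lemma AL:
  fixes I :: "nat set" and c :: real and v :: "nat \<Rightarrow> complex"
  assumes fin: "finite I" and ne: "I \<noteq> {}" and hv: "\<forall>i\<in>I. 0 \<le> Re (v i)" and c1: "c < 1"
    and cC: "1 + c * cos (pi / card I) ^ card I > 0"
  shows "(\<Prod>i\<in>I. 1 + v i) \<noteq> of_real c"
proof
  assume eq: "(\<Prod>i\<in>I. 1 + v i) = of_real c"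
  define n where "n = card I"
  have n0: "n > 0" using fin ne by (simp add: n_def card_gt_0_iff)
  define a where "a i = 1 + Re (v i)" for i
  define \<phi> where "\<phi> i = arctan (Im (v i) / a i)" for i
  have a1: "\<forall>i\<in>I. a i \<ge> 1" using hv by (simp add: a_def)
  have cpos: "cos (\<phi> i) > 0" for i unfolding \<phi>_def using arctan_bounded by (intro cos_gt_zero_pi) auto
  have b: "\<forall>i\<in>I. \<bar>\<phi> i\<bar> < pi/2"
  proof
    fix i show "\<bar>\<phi> i\<bar> < pi/2" unfolding \<phi>_def abs_less_iff using arctan_bounded[of "Im (v i) / a i"] by linarith
  qed
  have w: "1 + v i = complex_of_real (a i / cos (\<phi> i)) * cis (\<phi> i)" if "i \<in> I" for i
  proof -
    have ai: "a i \<noteq> 0" using a1 that by fastforce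
    have t: "sin (\<phi> i) / cos (\<phi> i) = Im (v i) / a i"
      unfolding \<phi>_def using tan_arctan by (simp add: tan_def)
    have "sin (\<phi> i) = (Im (v i) / a i) * cos (\<phi> i)" using t cpos[of i]
      by (simp add: field_simps)
    then have im: "a i / cos (\<phi> i) * sin (\<phi> i) = Im (v i)" using cpos[of i] ai
      by (simp add: field_simps)
    have re: "a i / cos (\<phi> i) * cos (\<phi> i) = Re (1 + v i)" using cpos[of i]
      by (simp add: a_def)
    show ?thesis using im re by (simp add: complex_eq_iff cis.ctr)
  qed
  define R where "R = (\<Prod>i\<in>I. a i / cos (\<phi> i))"
  define S where "S = (\<Sum>i\<in>I. \<phi> i)"
  define Pc where "Pc = (\<Prod>i\<in>I. cos (\<phi> i))"
  have Pcpos: "Pc > 0" unfolding Pc_def using cpos by (simp add: prod_pos)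
  have Pcle1: "Pc \<le> 1" unfolding Pc_def
    by (rule prod_le_1) (use cpos in \<open>auto intro: less_imp_le\<close>)
  have "(\<Prod>i\<in>I. 1 + v i) = (\<Prod>i\<in>I. complex_of_real (a i / cos (\<phi> i)) * cis (\<phi> i))"
    by (rule prod.cong) (use w in auto)
  also have "\<dots> = (\<Prod>i\<in>I. complex_of_real (a i / cos (\<phi> i))) * (\<Prod>i\<in>I. cis (\<phi> i))"
    by (rule prod.distrib)
  also have "\<dots> = complex_of_real R * cis S"
    unfolding R_def S_def of_real_prod prod_cis[OF fin] ..
  finally have eq2: "complex_of_real R * cis S = of_real c" using eq by simp
  have Rge: "R \<ge> 1 / Pc"
  proof -
    have "R = (\<Prod>i\<in>I. a i) / Pc" unfolding R_def Pc_def by (simp add: prod_dividef)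
    moreover have "(\<Prod>i\<in>I. a i) \<ge> 1" by (rule prod_ge_1) (use a1 in auto)
    ultimately show ?thesis using Pcpos by (simp add: divide_right_mono)
  qed
  have "1 / Pc > 0" using Pcpos by simp
  then have Rpos: "R > 0" using Rge by linarith
  have cS: "c = R * cos S" and sS: "R * sin S = 0"
    using eq2 by (auto simp: complex_eq_iff)
  have sin0: "sin S = 0" using sS Rpos by simp
  have cos1: "cos S = 1 \<or> cos S = -1"
    using sin_cos_squared_add[of S] sin0 by (simp add: power2_eq_1_iff)
  show False
  proof (cases "cos S = 1")
    case True
    then have "c = R" using cS by simp
    moreover have "1 / Pc \<ge> 1" using Pcpos Pcle1 by simp
    ultimately show False using c1 Rge by linarith
  next
    case False
    then have cm1: "cos S = -1" using cos1 by simp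
    then have cR: "c = - R" using cS by simp
    have Sabs: "\<bar>S\<bar> \<ge> pi"
    proof (rule ccontr)
      assume "\<not> pi \<le> \<bar>S\<bar>"
      then have "cos pi < cos \<bar>S\<bar>" by (intro cos_monotone_0_pi) auto
      then show False using cm1 by simp
    qed
    have Sb: "\<bar>S\<bar> < n * (pi/2)"
    proof -
      have "\<bar>S\<bar> \<le> (\<Sum>i\<in>I. \<bar>\<phi> i\<bar>)" unfolding S_def by (rule sum_abs)
      also have "\<dots> < (\<Sum>i\<in>I. pi/2)" by (rule sum_strict_mono) (use fin ne b in auto)
      finally show ?thesis by (simp add: n_def)
    qed
    have "Pc \<le> cos (S / n) ^ n" unfolding Pc_def S_def n_def by (rule cos_prod_bound[OF fin ne b])
    also have "\<dots> \<le> cos (pi / n) ^ n"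
    proof (rule power_mono)
      have "cos (S / n) = cos \<bar>S / n\<bar>" by (rule cos_abs_real[symmetric])
      also have "cos \<bar>S / n\<bar> = cos (\<bar>S\<bar> / n)" by (simp add: abs_divide)
      finally have eqa: "cos (S / n) = cos (\<bar>S\<bar> / n)" .
      have le1: "pi / n \<le> \<bar>S\<bar> / n" using Sabs n0 by (simp add: divide_right_mono)
      have le2: "\<bar>S\<bar> / n < pi / 2" using Sb n0 by (simp add: divide_simps mult.commute)
      show "cos (S / n) \<le> cos (pi / n)"
      proof -
        have "0 \<le> pi / n" by simp
        moreover have "\<bar>S\<bar> / n \<le> pi" using le2 pi_gt_zero by linarith
        ultimately show ?thesis unfolding eqa using le1 by (intro cos_monotone_0_pi_le) auto
      qed
      have "0 \<le> \<bar>S\<bar> / n" by simp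
      then show "0 \<le> cos (S / n)" unfolding eqa using le2 by (intro cos_ge_zero) linarith+
    qed
    finally have PcC: "Pc \<le> cos (pi / n) ^ n" .
    have "c * cos (pi / n) ^ n \<le> c * Pc" using cR Rpos PcC by (simp add: mult_left_mono_neg)
    also have "c * Pc = - R * Pc" using cR by simp
    also have "\<dots> \<le> -1" using Rge Pcpos by (simp add: field_simps)
    finally show False using cC by (simp add: n_def)
  qed
qed

lemma t_cc:
  fixes c \<beta> :: real and m :: nat
  assumes hc: "c = - \<beta> * 2 ^ m / (1 - \<beta>)" and b1: "\<beta> < 1"
  shows "complex_of_real c * of_real (1 - \<beta>) = - of_real \<beta> * (2::complex) ^ m"
proof -
  have "c * (1 - \<beta>) = - \<beta> * 2 ^ m" using hc b1 by simp
  then have "complex_of_real (c * (1 - \<beta>)) = of_real (- \<beta> * 2 ^ m)" by simp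
  then show ?thesis by simp
qed

lemma t_eY:
  fixes PP kk c1 b1 :: complex and m :: nat
  assumes Pnz: "PP \<noteq> 0" and cc: "c1 * (1 - b1) = - b1 * 2 ^ m"
    and kk: "kk = (1 - b1) * PP / 2 ^ m"
  shows "b1 * PP + (1 - b1) = kk * (2 ^ m / PP - c1)"
proof -
  have e1: "kk * (2 ^ m / PP) = 1 - b1" using Pnz by (simp add: kk field_simps)
  have "kk * c1 = (c1 * (1 - b1)) * PP / 2 ^ m" by (simp add: kk field_simps)
  also have "\<dots> = - b1 * PP" unfolding cc by simp
  finally have e2: "kk * c1 = - b1 * PP" .
  have "kk * (2 ^ m / PP - c1) = kk * (2 ^ m / PP) - kk * c1" by (rule right_diff_distrib)
  then show ?thesis unfolding e1 e2 by simp
qed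

lemma t_eX:
  fixes PP kk c1 b1 zz :: complex and m :: nat
  assumes Pnz: "PP \<noteq> 0" and cc: "c1 * (1 - b1) = - b1 * 2 ^ m"
    and kk: "kk = (1 - b1) * PP / 2 ^ m"
  shows "b1 * PP + (1 - b1) * zz = kk * (2 ^ m * zz / PP - c1)"
proof -
  have e1: "kk * (2 ^ m * zz / PP) = (1 - b1) * zz" using Pnz by (simp add: kk field_simps)
  have "kk * c1 = (c1 * (1 - b1)) * PP / 2 ^ m" by (simp add: kk field_simps)
  also have "\<dots> = - b1 * PP" unfolding cc by simp
  finally have e2: "kk * c1 = - b1 * PP" .
  have "kk * (2 ^ m * zz / PP - c1) = kk * (2 ^ m * zz / PP) - kk * c1" by (rule right_diff_distrib)
  then show ?thesis unfolding e1 e2 by simp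
qed

lemma t_Y0:
  fixes PP b1 :: complex
  assumes "b1 * PP + (1 - b1) = 0"
  shows "b1 * PP = b1 - 1"
proof -
  have "b1 * PP = b1 * PP + (1 - b1) - (1 - b1)" by simp
  also have "\<dots> = b1 - 1" using assms by simp
  finally show ?thesis .
qed

lemma t_fin:
  fixes PP b1 c1 :: complex and m :: nat
  assumes Y0: "b1 * PP = b1 - 1" and cc: "c1 * (1 - b1) = - b1 * 2 ^ m" and bnz: "b1 \<noteq> 0"
    and Pnz: "PP \<noteq> 0"
  shows "2 ^ m * 1 / PP = c1"
proof -
  have "b1 * (c1 * PP) = c1 * (b1 * PP)" by (simp add: algebra_simps)
  also have "\<dots> = - (c1 * (1 - b1))" unfolding Y0 by (simp add: algebra_simps)
  also have "\<dots> = b1 * 2 ^ m" unfolding cc by simp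
  finally have "c1 * PP = 2 ^ m" using bnz by simp
  then show ?thesis using Pnz by (simp add: field_simps)
qed

lemma Re_mobius_nonneg:
  fixes w :: complex assumes "cmod w \<ge> 1" "w \<noteq> -1"
  shows "0 \<le> Re ((w - 1) / (w + 1))"
proof -
  have "(cmod w)^2 \<ge> 1" using assms(1) by (simp add: one_le_power)
  then have "Re w ^ 2 + Im w ^ 2 \<ge> 1" by (simp add: cmod_power2)
  then have "0 \<le> (Re w - 1) * (Re w + 1) + Im w * Im w" by (simp add: algebra_simps power2_eq_square)
  then show ?thesis by (simp add: Re_divide)
qed

lemma conv_prods:
  fixes w :: "nat \<Rightarrow> complex" and I :: "nat set"
  assumes fin: "finite I" and nm: "\<forall>i\<in>I. w i \<noteq> -1"
  shows "(\<Prod>i\<in>I. 1 + (w i - 1) / (w i + 1)) = 2 ^ card I * (\<Prod>i\<in>I. w i) / (\<Prod>i\<in>I. 1 + w i)"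
    and "(\<Prod>i\<in>I. 1 - (w i - 1) / (w i + 1)) = 2 ^ card I / (\<Prod>i\<in>I. 1 + w i)"
proof -
  have nz: "\<forall>i\<in>I. 1 + w i \<noteq> 0" using nm by (metis add.commute add_eq_0_iff)
  have "(\<Prod>i\<in>I. 1 + (w i - 1) / (w i + 1)) = (\<Prod>i\<in>I. 2 * w i / (1 + w i))"
    by (rule prod.cong) (use nz in \<open>auto simp: field_simps\<close>)
  also have "\<dots> = (\<Prod>i\<in>I. 2 * w i) / (\<Prod>i\<in>I. 1 + w i)" by (rule prod_dividef)
  also have "(\<Prod>i\<in>I. 2 * w i) = 2 ^ card I * (\<Prod>i\<in>I. w i)" by (simp add: prod.distrib)
  finally show "(\<Prod>i\<in>I. 1 + (w i - 1) / (w i + 1)) = 2 ^ card I * (\<Prod>i\<in>I. w i) / (\<Prod>i\<in>I. 1 + w i)" .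
  have "(\<Prod>i\<in>I. 1 - (w i - 1) / (w i + 1)) = (\<Prod>i\<in>I. 2 / (1 + w i))"
    by (rule prod.cong) (use nz in \<open>auto simp: field_simps\<close>)
  also have "\<dots> = (\<Prod>i\<in>I. 2) / (\<Prod>i\<in>I. 1 + w i)" by (rule prod_dividef)
  finally show "(\<Prod>i\<in>I. 1 - (w i - 1) / (w i + 1)) = 2 ^ card I / (\<Prod>i\<in>I. 1 + w i)" by simp
qed

lemma core:
  fixes I :: "nat set" and \<beta> c :: real and w :: "nat \<Rightarrow> complex"
  assumes fin: "finite I" and ne: "I \<noteq> {}" and b1: "\<beta> < 1"
    and hc: "c = - \<beta> * 2 ^ card I / (1 - \<beta>)" and c1: "c < 1"
    and cC: "1 + c * cos (pi / card I) ^ card I > 0"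
    and hw: "\<forall>i\<in>I. cmod (w i) \<ge> 1"
  defines "X \<equiv> of_real \<beta> * (\<Prod>i\<in>I. 1 + w i) + of_real (1 - \<beta>) * (\<Prod>i\<in>I. w i)"
    and "Y \<equiv> of_real \<beta> * (\<Prod>i\<in>I. 1 + w i) + of_real (1 - \<beta>)"
  shows "cmod Y \<le> cmod X" and "\<not> (X = 0 \<and> Y = 0)"
proof -
  have ALv: "\<And>v. (\<forall>i\<in>I. 0 \<le> Re (v i)) \<Longrightarrow> (\<Prod>i\<in>I. 1 + v i) \<noteq> of_real c"
    using AL[OF fin ne _ c1 cC] by blast
  have zeta: "cmod (\<Prod>i\<in>I. w i) \<ge> 1"
  proof -
    have "cmod (\<Prod>i\<in>I. w i) = (\<Prod>i\<in>I. cmod (w i))" by (simp add: prod_norm)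
    also have "\<dots> \<ge> 1" by (rule prod_ge_1) (use hw in auto)
    finally show ?thesis .
  qed
  define u where "u i = (w i - 1) / (w i + 1)" for i
  define PP where "PP = (\<Prod>i\<in>I. 1 + w i)"
  define zz where "zz = (\<Prod>i\<in>I. w i)"
  define m where "m = card I"
  have bnz: "complex_of_real (1 - \<beta>) \<noteq> 0" using b1 by simp
  have cc: "complex_of_real c * (1 - of_real \<beta>) = - of_real \<beta> * (2::complex) ^ m"
    using t_cc[OF hc b1] unfolding m_def by simp
  have Yf: "Y = of_real \<beta> * PP + (1 - of_real \<beta>)" unfolding Y_def PP_def by simp
  have Xf: "X = of_real \<beta> * PP + (1 - of_real \<beta>) * zz" unfolding X_def PP_def zz_def by simp
  have P0: "PP = 0" if "\<exists>i\<in>I. w i = -1"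
  proof -
    from that obtain i0 where "i0 \<in> I" "w i0 = -1" by blast
    then show ?thesis unfolding PP_def using fin by (intro prod_zero) (auto intro!: bexI[of _ i0])
  qed
  have Pnz: "PP \<noteq> 0" if nm: "\<forall>i\<in>I. w i \<noteq> -1"
    unfolding PP_def using nm fin by (subst prod_zero_iff) (auto simp: add_eq_0_iff)
  show "cmod Y \<le> cmod X"
  proof (cases "\<exists>i\<in>I. w i = -1")
    case True
    then have "PP = 0" by (rule P0)
    then have "Y = of_real (1 - \<beta>)" "X = of_real (1 - \<beta>) * zz"
      unfolding Yf Xf by auto
    then show ?thesis using zeta b1 unfolding zz_def by (simp add: norm_mult)
  next
    case False
    then have nm: "\<forall>i\<in>I. w i \<noteq> -1" by blast
    have hu: "\<forall>i\<in>I. 0 \<le> Re (u i)" using hw nm by (auto simp: u_def intro!: Re_mobius_nonneg)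
    have KLu: "cmod ((\<Prod>i\<in>I. 1 - u i) - of_real c) \<le> cmod ((\<Prod>i\<in>I. 1 + u i) - of_real c)"
      by (rule KL[OF ALv fin hu])
    have pA: "(\<Prod>i\<in>I. 1 + u i) = 2 ^ m * zz / PP"
      unfolding u_def zz_def PP_def m_def using conv_prods(1)[OF fin nm] .
    have pB: "(\<Prod>i\<in>I. 1 - u i) = 2 ^ m / PP"
      unfolding u_def PP_def m_def using conv_prods(2)[OF fin nm] .
    define kk where "kk = (1 - of_real \<beta>) * PP / 2 ^ m"
    have eY: "Y = kk * ((\<Prod>i\<in>I. 1 - u i) - of_real c)"
      unfolding pB Yf by (rule t_eY[OF Pnz[OF nm] cc kk_def])
    have eX: "X = kk * ((\<Prod>i\<in>I. 1 + u i) - of_real c)"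
      unfolding pA Xf by (rule t_eX[OF Pnz[OF nm] cc kk_def])
    show ?thesis unfolding eX eY norm_mult using KLu by (simp add: mult_left_mono)
  qed
  show "\<not> (X = 0 \<and> Y = 0)"
  proof
    assume XY: "X = 0 \<and> Y = 0"
    then have "X - Y = 0" by simp
    then have "of_real (1 - \<beta>) * (zz - 1) = 0" unfolding Xf Yf
      by (simp add: algebra_simps)
    then have z1: "zz = 1" using bnz by simp
    have Y0: "of_real \<beta> * PP = of_real \<beta> - 1" using XY unfolding Yf by (intro t_Y0) simp
    show False
    proof (cases "\<exists>i\<in>I. w i = -1")
      case True
      then have "PP = 0" by (rule P0)
      then show False using Y0 b1 by simp
    next
      case False
      then have nm: "\<forall>i\<in>I. w i \<noteq> -1" by blast
      have hu: "\<forall>i\<in>I. 0 \<le> Re (u i)" using hw nm by (auto simp: u_def intro!: Re_mobius_nonneg)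
      have pA: "(\<Prod>i\<in>I. 1 + u i) = 2 ^ m * zz / PP"
        unfolding u_def zz_def PP_def m_def using conv_prods(1)[OF fin nm] .
      have bnz0: "complex_of_real \<beta> \<noteq> 0" using Y0 by auto
      have "(\<Prod>i\<in>I. 1 + u i) = of_real c"
        unfolding pA z1 by (rule t_fin[OF Y0 cc bnz0 Pnz[OF nm]])
      then show False using ALv[OF hu] by simp
    qed
  qed
qed

lemma params:
  fixes k :: nat and \<beta> :: real
  assumes "k \<ge> 2"
    and h: "(k = 2 \<and> -1 < \<beta> \<and> \<beta> < 1) \<or>
         (k \<ge> 3 \<and> - 1 / (2 ^ (k - 1) - 1) < \<beta> \<and>
          \<beta> < 1 / (2 ^ (k - 1) * cos (pi / real (k - 1)) ^ (k - 1) + 1))"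
  defines "c \<equiv> - \<beta> * 2 ^ (k - 1) / (1 - \<beta>)"
  shows "\<beta> < 1" "c < 1" "1 + c * cos (pi / real (k - 1)) ^ (k - 1) > 0"
proof -
  have "\<beta> < 1 \<and> c < 1 \<and> 1 + c * cos (pi / real (k - 1)) ^ (k - 1) > 0"
  proof (cases "k = 2")
    case True
    then have b: "-1 < \<beta>" "\<beta> < 1" using h by auto
    have c: "c = - 2 * \<beta> / (1 - \<beta>)" using True by (simp add: c_def)
    have "c < 1" unfolding c using b by (simp add: divide_simps)
    then show ?thesis using b True by simp
  next
    case False
    then have k3: "k \<ge> 3" using assms(1) by simp
    define m where "m = k - 1"
    define C where "C = cos (pi / real m) ^ m"
    have m2: "m \<ge> 2" using k3 by (simp add: m_def)
    have hb: "- 1 / (2 ^ m - 1) < \<beta>" "\<beta> < 1 / (2 ^ m * C + 1)"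
      using h k3 by (auto simp: m_def C_def)
    have rm: "real m \<ge> 2" using m2 by simp
    have "pi / real m \<le> pi / 2" by (rule divide_left_mono) (use rm pi_gt_zero in auto)
    moreover have "0 \<le> pi / real m" by simp
    ultimately have C0: "C \<ge> 0" unfolding C_def
      by (intro zero_le_power cos_ge_zero) linarith+
    have pm: "(2::real) ^ m \<ge> 4" using m2
      by (metis power2_eq_square numeral_Bit0 mult_2 power_increasing one_le_numeral numeral_times_numeral)
    have D: "2 ^ m * C + 1 \<ge> 1" using C0 by simp
    have b1: "\<beta> < 1" using hb(2) D
      by (smt (verit) divide_le_eq_1_pos)
    have b2: "\<beta> * (2 ^ m * C + 1) < 1" using hb(2) D by (simp add: less_divide_eq)
    have pos: "(2::real) ^ m - 1 > 0" using pm by simp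
    have "-1 / (2 ^ m - 1) * (2 ^ m - 1) < \<beta> * (2 ^ m - 1)"
      by (rule mult_strict_right_mono[OF hb(1) pos])
    then have b3: "-1 < \<beta> * (2 ^ m - 1)" using pos by simp
    have c: "c = - \<beta> * 2 ^ m / (1 - \<beta>)" by (simp add: c_def m_def)
    have "c < 1" unfolding c using b1 b3 by (simp add: divide_simps algebra_simps)
    moreover have "1 + c * C > 0"
    proof -
      have "1 + c * C = (1 - \<beta> - \<beta> * 2 ^ m * C) / (1 - \<beta>)"
        unfolding c using b1 by (simp add: field_simps)
      also have "\<dots> > 0" using b1 b2 by (simp add: algebra_simps)
      finally show ?thesis .
    qed
    ultimately show ?thesis using b1 by (simp add: C_def m_def)
  qed
  then show "\<beta> < 1" "c < 1" "1 + c * cos (pi / real (k - 1)) ^ (k - 1) > 0" by auto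
qed

theorem lemma4p9:
  fixes k :: nat and \<beta> :: real
  assumes "k \<ge> 2"
    and "(k = 2 \<and> -1 < \<beta> \<and> \<beta> < 1) \<or>
         (k \<ge> 3 \<and> - 1 / (2 ^ (k - 1) - 1) < \<beta> \<and>
          \<beta> < 1 / (2 ^ (k - 1) * cos (pi / real (k - 1)) ^ (k - 1) + 1))"
  shows "lee_yang k (ising_edge k \<beta>)"
  unfolding lee_yang_def
proof (intro allI impI)
  fix w :: "nat \<Rightarrow> complex"
  assume hw: "(\<forall>i\<in>{1..k}. 1 \<le> cmod (w i)) \<and> (\<exists>i\<in>{1..k}. 1 < cmod (w i))"
  then obtain j where j: "j \<in> {1..k}" "cmod (w j) > 1" by blast
  define I where "I = {1..k} - {j}"
  define c where "c = - \<beta> * 2 ^ (k - 1) / (1 - \<beta>)"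
  have fin: "finite I" by (simp add: I_def)
  have cI: "card I = k - 1" using j by (simp add: I_def)
  have ne: "I \<noteq> {}" using assms(1) cI by (metis card.empty diff_is_0_eq not_numeral_le_zero
      Suc_1 not_less_eq_eq)
  note pr = params[OF assms, folded c_def]
  have hwI: "\<forall>i\<in>I. cmod (w i) \<ge> 1" using hw by (auto simp: I_def)
  define X where "X = of_real \<beta> * (\<Prod>i\<in>I. 1 + w i) + of_real (1 - \<beta>) * (\<Prod>i\<in>I. w i)"
  define Y where "Y = of_real \<beta> * (\<Prod>i\<in>I. 1 + w i) + complex_of_real (1 - \<beta>)"
  have co: "cmod Y \<le> cmod X" "\<not> (X = 0 \<and> Y = 0)"
    using core[OF fin ne pr(1), of c, unfolded cI, OF c_def pr(2) pr(3) hwI]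
    unfolding X_def Y_def by auto
  have p1: "(\<Prod>i\<in>{1..k}. 1 + w i) = (1 + w j) * (\<Prod>i\<in>I. 1 + w i)"
    unfolding I_def using prod.remove[of "{1..k}" j "\<lambda>i. 1 + w i"] j by simp
  have p2: "(\<Prod>i\<in>{1..k}. w i) = w j * (\<Prod>i\<in>I. w i)"
    unfolding I_def using prod.remove[of "{1..k}" j w] j by simp
  have eq: "ising_edge k \<beta> w = w j * X + Y"
    unfolding ising_edge_def p1 p2 X_def Y_def by (simp add: algebra_simps)
  show "ising_edge k \<beta> w \<noteq> 0"
  proof
    assume "ising_edge k \<beta> w = 0"
    then have e: "w j * X = - Y" using eq by (simp add: add_eq_0_iff)
    show False
    proof (cases "X = 0")
      case True
      then show False using e co(2) by simp
    next
      case False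
      have "cmod (w j) * cmod X = cmod Y" using e by (metis norm_minus_cancel norm_mult)
      also have "\<dots> \<le> 1 * cmod X" using co(1) by simp
      finally have "cmod (w j) \<le> 1" using False by (simp add: mult_le_cancel_right)
      then show False using j by simp
    qed
  qed
qed

end
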